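(* Let $F\in\mathrm{GL}^+(n)$ and $H\in\mathbb{R}^{n\times n}$ such that $\operatorname{rank}(H)=1$ and $F+H\in\mathrm{GL}^+(n)$. Then there exist finitely many $t_1,\dots,t_m\in(0,1)$ such that the mapping $t\mapsto\hat\lambda(F+tH)$, sending $t$ to the vector of ordered singular values $\hat\lambda_1(F+tH)\geq\dots\geq\hat\lambda_n(F+tH)$, is twice continuously differentiable on $(0,1)\setminus\{t_1,\dots,t_m\}$.
   Context: $\mathrm{GL}^+(n)$ is the group of real invertible $n\times n$ matrices with positive determinant. *)

theory Defs
  imports "HOL-Analysis.Analysis" "HOL-Computational_Algebra.Polynomial"
begin

definition charpoly :: "real^'n^'n \<Rightarrow> real poly" where
  "charpoly A = det (\<chi> i j. (if i = j then [:0, 1:] else 0) - [:A $ i $ j:])"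

text \<open>Ordered singular values: the square roots of the eigenvalues of A^T A
  (with algebraic multiplicity), listed in decreasing order.
  Entry k (k < CARD('n)) is the (k+1)-th largest singular value.\<close>
definition sing_vals :: "real^'n^'n \<Rightarrow> real list" where
  "sing_vals A = rev (sorted_list_of_multiset
      (image_mset sqrt (proots (charpoly (transpose A ** A)))))"

definition C2_on :: "real set \<Rightarrow> (real \<Rightarrow> real) \<Rightarrow> bool" where
  "C2_on U f \<longleftrightarrow> (\<exists>f1 f2. (\<forall>t\<in>U. (f has_real_derivative f1 t) (at t)
       \<and> (f1 has_real_derivative f2 t) (at t)) \<and> continuous_on U f2)"

end

theory Submission
  imports Defs "Subresultants.Subresultant_Gcd" "HOL-Computational_Algebra.Fundamental_Theorem_Algebra"
    "HOL-Computational_Algebra.Field_as_Ring"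
begin

hide_const (open) Determinant.det Matrix.mat Matrix.row Matrix.col Matrix.vec
no_notation Matrix.vec_index (infixl "$" 100)
no_notation transpose_mat ("(_\<^sup>T)" [1000])



definition ev2 :: "real poly poly \<Rightarrow> real \<Rightarrow> real poly" where
  "ev2 q t = map_poly (\<lambda>c. poly c t) q"
definition ev :: "real poly poly \<Rightarrow> real \<Rightarrow> real \<Rightarrow> real" where
  "ev q t x = poly (ev2 q t) x"
definition qT :: "real poly poly \<Rightarrow> real poly poly" where
  "qT q = map_poly pderiv q"

lemma ev_0[simp]: "ev 0 t x = 0" by (simp add: ev_def ev2_def)
lemma ev_pCons: "ev (pCons a p) t x = poly a t + x * ev p t x"
  by (simp add: ev_def ev2_def poly_hom.map_poly_pCons_hom)
lemma ev_add: "ev (p + q) t x = ev p t x + ev q t x"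
  by (simp add: ev_def ev2_def poly_hom.map_poly_hom_add)
lemma qT_pCons: "qT (pCons a p) = pCons (pderiv a) (qT p)"
  by (simp add: qT_def Polynomial.map_poly_pCons)

lemma ev_deriv_chain:
  assumes "(r has_real_derivative r') (at t)"
  shows "((\<lambda>s. ev q s (r s)) has_real_derivative
           (ev (qT q) t (r t) + ev (pderiv q) t (r t) * r')) (at t)"
proof (induction q rule: pCons_induct)
  case 0 then show ?case by (simp add: qT_def)
next
  case (pCons a p)
  have da: "((\<lambda>s. poly a s) has_real_derivative poly (pderiv a) t) (at t)" by (rule poly_DERIV)
  have "((\<lambda>s. poly a s + r s * ev p s (r s)) has_real_derivative
     (poly (pderiv a) t + (r' * ev p t (r t) + (ev (qT p) t (r t) + ev (pderiv p) t (r t) * r') * r t))) (at t)"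
    by (rule DERIV_add[OF da DERIV_mult[OF assms pCons.IH]])
  moreover have "ev (qT (pCons a p)) t (r t) + ev (pderiv (pCons a p)) t (r t) * r' =
     poly (pderiv a) t + (r' * ev p t (r t) + (ev (qT p) t (r t) + ev (pderiv p) t (r t) * r') * r t)"
    by (simp add: qT_pCons ev_pCons pderiv_pCons ev_add algebra_simps)
  ultimately show ?case by (simp add: ev_pCons)
qed

lemma ev_deriv_x: "((ev q t) has_real_derivative ev (pderiv q) t x) (at x)"
proof -
  have "ev q t = poly (ev2 q t)" by (simp add: ev_def[abs_def])
  moreover have "ev (pderiv q) t x = poly (pderiv (ev2 q t)) x"
    by (simp add: ev_def ev2_def poly_hom.map_poly_pderiv)
  ultimately show ?thesis by (simp add: poly_DERIV)
qed

lemma ev_deriv_t: "((\<lambda>s. ev q s x) has_real_derivative ev (qT q) t x) (at t)"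
  using ev_deriv_chain[of "\<lambda>s. x" 0 t q] by simp

lemma isCont_poly_real[simp]: "isCont (poly (a::real poly)) x"
  by (rule DERIV_isCont[OF poly_DERIV])

lemma ev_cont2: "isCont (\<lambda>z. ev q (fst z) (snd z)) z"
proof (induction q rule: pCons_induct)
  case 0 then show ?case by simp
next
  case (pCons a p)
  have "isCont (\<lambda>z. poly a (fst z)) z"
    by (rule continuous_at_compose[OF _ isCont_poly_real, unfolded o_def]) (intro continuous_intros)
  then have "isCont (\<lambda>z. poly a (fst z) + snd z * ev p (fst z) (snd z)) z"
    using pCons by (intro continuous_intros) auto
  then show ?case by (simp add: ev_pCons)
qed

lemma ev_cont_comp:
  assumes "isCont r t"
  shows "isCont (\<lambda>s. ev q s (r s)) t"
proof -
  have "isCont (\<lambda>s. (s, r s)) t" using assms by (intro continuous_intros)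
  from continuous_at_compose[OF this ev_cont2] show ?thesis by (simp add: o_def)
qed

lemma MVT_sym:
  assumes "\<And>x. (f has_real_derivative f' x) (at x)"
  shows "\<exists>z. \<bar>z - a\<bar> \<le> \<bar>b - a\<bar> \<and> f b - f a = (b - a) * f' z"
proof (cases a b rule: linorder_cases)
  case less
  from MVT2[OF less assms] obtain z where "z > a" "z < b" "f b - f a = (b - a) * f' z" by blast
  then show ?thesis by (intro exI[of _ z]) auto
next
  case equal then show ?thesis by (intro exI[of _ a]) auto
next
  case greater
  from MVT2[OF greater assms] obtain z where "z > b" "z < a" "f a - f b = (a - b) * f' z" by blast
  then show ?thesis by (intro exI[of _ z]) (auto simp: algebra_simps)
qed

lemma implicit_deriv:
  fixes F Ft Fx :: "real \<Rightarrow> real \<Rightarrow> real" and r :: "real \<Rightarrow> real"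
  assumes dt: "\<And>s y. ((\<lambda>u. F u y) has_real_derivative Ft s y) (at s)"
    and dx: "\<And>s y. ((F s) has_real_derivative Fx s y) (at y)"
    and ct: "isCont (\<lambda>z. Ft (fst z) (snd z)) (t, r t)"
    and cx: "isCont (Fx t) (r t)"
    and cr: "isCont r t"
    and nz: "Fx t (r t) \<noteq> 0"
    and e: "e > 0" and root: "\<And>s. \<bar>s - t\<bar> < e \<Longrightarrow> F s (r s) = 0"
  shows "(r has_real_derivative (- Ft t (r t) / Fx t (r t))) (at t)"
proof -
  have "\<forall>s. \<exists>z. \<bar>z - t\<bar> \<le> \<bar>s - t\<bar> \<and> F s (r s) - F t (r s) = (s - t) * Ft z (r s)"
    using MVT_sym[of "\<lambda>u. F u _" "\<lambda>z. Ft z _", OF dt] by blast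
  then obtain xi where xi: "\<And>s. \<bar>xi s - t\<bar> \<le> \<bar>s - t\<bar> \<and> F s (r s) - F t (r s) = (s - t) * Ft (xi s) (r s)"
    by metis
  have "\<forall>s. \<exists>w. \<bar>w - r t\<bar> \<le> \<bar>r s - r t\<bar> \<and> F t (r s) - F t (r t) = (r s - r t) * Fx t w"
    using MVT_sym[of "F t" "Fx t", OF dx] by blast
  then obtain eta where eta: "\<And>s. \<bar>eta s - r t\<bar> \<le> \<bar>r s - r t\<bar> \<and> F t (r s) - F t (r t) = (r s - r t) * Fx t (eta s)"
    by metis
  have rt: "(r \<longlongrightarrow> r t) (at t)" using cr by (simp add: isCont_def)
  have "((\<lambda>s. xi s - t) \<longlongrightarrow> 0) (at t)"
  proof (rule Lim_null_comparison)
    show "\<forall>\<^sub>F s in at t. norm (xi s - t) \<le> \<bar>s - t\<bar>" using xi by simp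
    have "((\<lambda>s. s - t) \<longlongrightarrow> t - t) (at t)" by (intro tendsto_intros)
    then have "((\<lambda>s. \<bar>s - t\<bar>) \<longlongrightarrow> \<bar>t - t\<bar>) (at t)" by (intro tendsto_intros)
    then show "((\<lambda>s. \<bar>s - t\<bar>) \<longlongrightarrow> 0) (at t)" by simp
  qed
  then have xit: "(xi \<longlongrightarrow> t) (at t)" by (simp add: LIM_zero_iff)
  have "((\<lambda>s. eta s - r t) \<longlongrightarrow> 0) (at t)"
  proof (rule Lim_null_comparison)
    show "\<forall>\<^sub>F s in at t. norm (eta s - r t) \<le> \<bar>r s - r t\<bar>" using eta by simp
    have "((\<lambda>s. r s - r t) \<longlongrightarrow> r t - r t) (at t)" by (rule tendsto_diff[OF rt tendsto_const])
    then have "((\<lambda>s. \<bar>r s - r t\<bar>) \<longlongrightarrow> \<bar>r t - r t\<bar>) (at t)" by (rule tendsto_rabs)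
    then show "((\<lambda>s. \<bar>r s - r t\<bar>) \<longlongrightarrow> 0) (at t)" by simp
  qed
  then have etat: "(eta \<longlongrightarrow> r t) (at t)" by (simp add: LIM_zero_iff)
  have "((\<lambda>s. (xi s, r s)) \<longlongrightarrow> (t, r t)) (at t)" by (intro tendsto_Pair xit rt)
  from isCont_tendsto_compose[OF ct this]
  have l1: "((\<lambda>s. Ft (xi s) (r s)) \<longlongrightarrow> Ft t (r t)) (at t)" by simp
  have l2: "((\<lambda>s. Fx t (eta s)) \<longlongrightarrow> Fx t (r t)) (at t)"
    by (rule isCont_tendsto_compose[OF cx etat])
  have lim: "((\<lambda>s. - Ft (xi s) (r s) / Fx t (eta s)) \<longlongrightarrow> - Ft t (r t) / Fx t (r t)) (at t)"
    by (intro tendsto_intros l1 l2 nz)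
  have ev1: "\<forall>\<^sub>F s in at t. Fx t (eta s) \<noteq> 0"
    by (rule tendsto_imp_eventually_ne[OF l2 nz])
  have ev2: "\<forall>\<^sub>F s in at t. \<bar>s - t\<bar> < e"
    using e by (auto simp: eventually_at dist_real_def intro!: exI[of _ e])
  have ev3: "\<forall>\<^sub>F s in at t. s \<noteq> t" by (simp add: eventually_at_filter)
  have "\<forall>\<^sub>F s in at t. - Ft (xi s) (r s) / Fx t (eta s) = (r s - r t) / (s - t)"
    using ev1 ev2 ev3
  proof eventually_elim
    case (elim s)
    have "F s (r s) = 0" "F t (r t) = 0" using root elim(2) e by auto
    then have "(s - t) * Ft (xi s) (r s) + (r s - r t) * Fx t (eta s) = 0"
      using xi[of s] eta[of s] by linarith
    then show ?case using elim(1,3) by (auto simp: field_simps)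
  qed
  from Lim_transform_eventually[OF lim this]
  show ?thesis by (simp add: has_field_derivative_iff)
qed




lemma ev_uminus: "ev (- q) t x = - ev q t x"
  using ev_add[of q "-q" t x] by simp

lemma ev_cont_x: "continuous_on A (ev q t)"
  by (rule continuous_at_imp_continuous_on) (auto intro: DERIV_isCont[OF ev_deriv_x])

lemma ev_cont_t: "isCont (\<lambda>s. ev q s x) t"
  by (rule DERIV_isCont[OF ev_deriv_t])

lemma cont_pos_nhd:
  fixes f :: "real \<Rightarrow> real"
  assumes "isCont f a" "f a > 0"
  shows "\<exists>d>0. \<forall>x. \<bar>x - a\<bar> < d \<longrightarrow> f x > 0"
proof -
  from assms(1) have "f \<midarrow>a\<rightarrow> f a" by (simp add: isCont_def)
  from LIM_D[OF this assms(2)] obtain s where s: "s > 0"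
    "\<And>x. x \<noteq> a \<and> norm (x - a) < s \<Longrightarrow> norm (f x - f a) < f a" by blast
  show ?thesis
  proof (intro exI[of _ s] conjI allI impI s)
    fix x assume "\<bar>x - a\<bar> < s"
    then show "f x > 0" using s(2)[of x] assms(2) by (cases "x = a") auto
  qed
qed

lemma root_nearby_pos:
  assumes "ev q t1 x1 = 0" "ev (pderiv q) t1 x1 > 0" "e > 0"
  shows "\<exists>d>0. \<forall>t. \<bar>t - t1\<bar> < d \<longrightarrow> (\<exists>x. \<bar>x - x1\<bar> < e \<and> ev q t x = 0)"
proof -
  obtain d1 where d1: "d1 > 0" "\<And>h. h > 0 \<Longrightarrow> h < d1 \<Longrightarrow> ev q t1 x1 < ev q t1 (x1 + h)"
    using DERIV_pos_inc_right[OF ev_deriv_x assms(2)] by blast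
  obtain d2 where d2: "d2 > 0" "\<And>h. h > 0 \<Longrightarrow> h < d2 \<Longrightarrow> ev q t1 (x1 - h) < ev q t1 x1"
    using DERIV_pos_inc_left[OF ev_deriv_x assms(2)] by blast
  define h where "h = min (min d1 d2) e / 2"
  have h: "h > 0" "h < d1" "h < d2" "h < e" using d1 d2 assms(3) by (auto simp: h_def)
  have p1: "ev q t1 (x1 + h) > 0" using d1(2)[OF h(1,2)] assms(1) by simp
  have p2: "- ev q t1 (x1 - h) > 0" using d2(2)[OF h(1,3)] assms(1) by simp
  obtain a1 where a1: "a1 > 0" "\<And>t. \<bar>t - t1\<bar> < a1 \<Longrightarrow> ev q t (x1 + h) > 0"
    using cont_pos_nhd[OF ev_cont_t p1] by blast
  have "isCont (\<lambda>s. - ev q s (x1 - h)) t1" by (intro continuous_intros ev_cont_t)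
  then obtain a2 where a2: "a2 > 0" "\<And>t. \<bar>t - t1\<bar> < a2 \<Longrightarrow> - ev q t (x1 - h) > 0"
    using cont_pos_nhd[where f="\<lambda>s. - ev q s (x1 - h)" and a=t1] p2 by blast
  show ?thesis
  proof (rule exI[of _ "min a1 a2"], intro conjI allI impI)
    show "min a1 a2 > 0" using a1 a2 by simp
    fix t assume "\<bar>t - t1\<bar> < min a1 a2"
    then have "ev q t (x1 - h) \<le> 0" "0 \<le> ev q t (x1 + h)" using a1(2)[of t] a2(2)[of t] by auto
    from IVT'[of "ev q t", OF this _ ev_cont_x] h(1)
    obtain x where "x \<ge> x1 - h" "x \<le> x1 + h" "ev q t x = 0" by auto
    then show "\<exists>x. \<bar>x - x1\<bar> < e \<and> ev q t x = 0" using h(4) by (intro exI[of _ x]) auto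
  qed
qed

lemma root_nearby:
  assumes "ev q t1 x1 = 0" "ev (pderiv q) t1 x1 \<noteq> 0" "e > 0"
  shows "\<exists>d>0. \<forall>t. \<bar>t - t1\<bar> < d \<longrightarrow> (\<exists>x. \<bar>x - x1\<bar> < e \<and> ev q t x = 0)"
proof (cases "ev (pderiv q) t1 x1 > 0")
  case True then show ?thesis using root_nearby_pos[OF assms(1) _ assms(3)] by blast
next
  case False
  then have "ev (pderiv (-q)) t1 x1 > 0" using assms(2) by (simp add: pderiv_minus ev_uminus)
  moreover have "ev (-q) t1 x1 = 0" using assms(1) by (simp add: ev_uminus)
  ultimately show ?thesis using root_nearby_pos[of "-q" t1 x1 e] assms(3) by (simp add: ev_uminus)
qed

lemma box_unique:
  assumes pos: "\<And>y. \<bar>y - x0\<bar> \<le> d \<Longrightarrow> c * ev (pderiv q) t y > 0"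
    and "\<bar>y1 - x0\<bar> \<le> d" "\<bar>y2 - x0\<bar> \<le> d" "ev q t y1 = 0" "ev q t y2 = 0"
  shows "y1 = y2"
proof (rule ccontr)
  assume ne: "y1 \<noteq> y2"
  have *: "a < b \<Longrightarrow> \<bar>a - x0\<bar> \<le> d \<Longrightarrow> \<bar>b - x0\<bar> \<le> d \<Longrightarrow> ev q t a = 0 \<Longrightarrow> ev q t b = 0 \<Longrightarrow> False" for a b
  proof -
    assume ab: "a < b" "\<bar>a - x0\<bar> \<le> d" "\<bar>b - x0\<bar> \<le> d" "ev q t a = 0" "ev q t b = 0"
    have "(\<lambda>y. c * ev q t y) a < (\<lambda>y. c * ev q t y) b"
    proof (rule DERIV_pos_imp_increasing[OF ab(1)])
      fix x assume "a \<le> x" "x \<le> b"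
      then have "\<bar>x - x0\<bar> \<le> d" using ab by auto
      then show "\<exists>y. ((\<lambda>y. c * ev q t y) has_real_derivative y) (at x) \<and> 0 < y"
        using pos DERIV_cmult[OF ev_deriv_x, of c q t x] by blast
    qed
    then show False using ab by simp
  qed
  show False using ne *[of y1 y2] *[of y2 y1] assms by (cases "y1 < y2") auto
qed

lemma box_exists:
  assumes "ev (pderiv q) t0 x0 \<noteq> 0"
  shows "\<exists>d>0. \<forall>t y. \<bar>t - t0\<bar> < d \<and> \<bar>y - x0\<bar> < d \<longrightarrow>
            ev (pderiv q) t0 x0 * ev (pderiv q) t y > 0"
proof -
  define c where "c = ev (pderiv q) t0 x0"
  have ic: "isCont (\<lambda>z. ev (pderiv q) (fst z) (snd z)) (t0, x0)" by (rule ev_cont2)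
  then have "(\<lambda>z. ev (pderiv q) (fst z) (snd z)) \<midarrow>(t0, x0)\<rightarrow> c" by (simp add: isCont_def c_def)
  from LIM_D[OF this, of "\<bar>c\<bar>"] assms obtain s where s: "s > 0"
    "\<And>z. z \<noteq> (t0, x0) \<and> norm (z - (t0, x0)) < s \<Longrightarrow> norm (ev (pderiv q) (fst z) (snd z) - c) < \<bar>c\<bar>"
    by (auto simp: c_def)
  show ?thesis
  proof (intro exI[of _ "s/2"] conjI allI impI)
    show "s / 2 > 0" using s by simp
    fix t y assume ty: "\<bar>t - t0\<bar> < s / 2 \<and> \<bar>y - x0\<bar> < s / 2"
    have "\<bar>ev (pderiv q) t y - c\<bar> < \<bar>c\<bar>"
    proof (cases "(t, y) = (t0, x0)")
      case True then show ?thesis using assms by (simp add: c_def)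
    next
      case False
      have "norm ((t, y) - (t0, x0)) \<le> norm (t - t0) + norm (y - x0)"
        using norm_Pair_le[of "t - t0" "y - x0"] by simp
      also have "\<dots> < s" using ty by simp
      finally show ?thesis using s(2)[of "(t, y)"] False by simp
    qed
    then have "c * ev (pderiv q) t y > 0"
      by (cases "c > 0") (auto simp: abs_if mult_pos_pos mult_neg_neg split: if_splits)
    then show "ev (pderiv q) t0 x0 * ev (pderiv q) t y > 0" by (simp add: c_def)
  qed
qed




lemma ev_pderiv_eq: "ev (pderiv q) t x = poly (pderiv (ev2 q t)) x"
  by (simp add: ev_def ev2_def poly_hom.map_poly_pderiv)

lemma ev2_lc:
  assumes "poly (lead_coeff q) t \<noteq> 0"
  shows "degree (ev2 q t) = degree q" "ev2 q t \<noteq> 0"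
proof -
  have c: "coeff (ev2 q t) (degree q) \<noteq> 0" using assms by (simp add: ev2_def coeff_map_poly)
  have "degree (ev2 q t) \<le> degree q" unfolding ev2_def by (rule degree_map_poly_le)
  moreover have "degree q \<le> degree (ev2 q t)" by (rule le_degree[OF c])
  ultimately show "degree (ev2 q t) = degree q" by simp
  show "ev2 q t \<noteq> 0" using c by auto
qed

definition C2at :: "(real \<Rightarrow> real) \<Rightarrow> real \<Rightarrow> real \<Rightarrow> bool" where
  "C2at f t0 e \<longleftrightarrow> (\<exists>f1 f2. \<forall>s. \<bar>s - t0\<bar> < e \<longrightarrow>
      (f has_real_derivative f1 s) (at s) \<and> (f1 has_real_derivative f2 s) (at s) \<and> isCont f2 s)"

lemma branch_lemma:
  fixes q :: "real poly poly" and t0 :: real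
  assumes lc: "\<And>t. poly (lead_coeff q) t \<noteq> 0"
    and sf: "\<And>x. \<not> (ev q t0 x = 0 \<and> ev (pderiv q) t0 x = 0)"
    and split: "size (proots (ev2 q t0)) = degree q"
  shows "\<exists>e>0. \<exists>r. (\<forall>t. \<bar>t - t0\<bar> < e \<longrightarrow> proots (ev2 q t) = image_mset (\<lambda>x. r x t) (proots (ev2 q t0)))
     \<and> (\<forall>x\<in>#proots (ev2 q t0). r x t0 = x \<and> C2at (r x) t0 e)"
proof -
  note deg = ev2_lc(1)[OF lc] and nz = ev2_lc(2)[OF lc]
  define S where "S = {x. ev q t0 x = 0}"
  have S': "S = {x. poly (ev2 q t0) x = 0}" by (simp add: S_def ev_def)
  have fin: "finite S" unfolding S' by (rule poly_roots_finite[OF nz])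
  have rsq: "rsquarefree (ev2 q t0)" unfolding rsquarefree_roots
    using sf by (simp add: ev_pderiv_eq[symmetric]) (simp add: ev_def)
  have PS: "proots (ev2 q t0) = mset_set S"
  proof (rule multiset_eqI)
    fix x
    show "count (proots (ev2 q t0)) x = count (mset_set S) x"
    proof (cases "x \<in> S")
      case True
      then show ?thesis using rsquarefree_root_order[OF rsq _ nz, of x] fin
        by (simp add: count_proots[OF nz] S')
    next
      case False
      then show ?thesis using order_root[of "ev2 q t0" x] nz fin
        by (simp add: count_proots[OF nz] S')
    qed
  qed
  have cardS: "card S = degree q" using split by (simp add: PS)
  define c where "c x0 = ev (pderiv q) t0 x0" for x0
  have cnz: "c x0 \<noteq> 0" if "x0 \<in> S" for x0 using sf[of x0] that by (simp add: S_def c_def)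
  define P where "P d \<longleftrightarrow> (\<forall>x0\<in>S. \<forall>t y. \<bar>t - t0\<bar> < d \<and> \<bar>y - x0\<bar> \<le> d \<longrightarrow> c x0 * ev (pderiv q) t y > 0)
      \<and> (\<forall>x0\<in>S. \<forall>x1\<in>S. x0 \<noteq> x1 \<longrightarrow> 2 * d < \<bar>x0 - x1\<bar>)" for d
  have "eventually P (at_right 0)"
    unfolding P_def
  proof (intro eventually_conj eventually_ball_finite fin ballI)
    fix x0 assume x0: "x0 \<in> S"
    from box_exists[OF cnz[OF x0, unfolded c_def]] obtain d0 where d0: "d0 > 0"
      "\<And>t y. \<bar>t - t0\<bar> < d0 \<and> \<bar>y - x0\<bar> < d0 \<Longrightarrow> c x0 * ev (pderiv q) t y > 0"
      by (auto simp: c_def)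
    show "\<forall>\<^sub>F d in at_right 0. \<forall>t y. \<bar>t - t0\<bar> < d \<and> \<bar>y - x0\<bar> \<le> d \<longrightarrow> c x0 * ev (pderiv q) t y > 0"
      unfolding eventually_at_right_field
      by (rule exI[of _ d0]) (use d0 in auto)
  next
    fix x0 x1 assume "x0 \<in> S" "x1 \<in> S"
    show "\<forall>\<^sub>F d in at_right 0. x0 \<noteq> x1 \<longrightarrow> 2 * d < \<bar>x0 - x1\<bar>"
    proof (cases "x0 = x1")
      case True then show ?thesis by simp
    next
      case False
      then show ?thesis unfolding eventually_at_right_field
        by (intro exI[of _ "\<bar>x0 - x1\<bar> / 2"]) auto
    qed
  qed
  then obtain b where b: "b > 0" "\<And>y. y > 0 \<Longrightarrow> y < b \<Longrightarrow> P y"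
    unfolding eventually_at_right_field by auto
  define \<delta> where "\<delta> = b / 2"
  have dpos: "\<delta> > 0" and Pd: "P \<delta>" using b by (auto simp: \<delta>_def)
  have box: "\<And>x0 t y. x0 \<in> S \<Longrightarrow> \<bar>t - t0\<bar> < \<delta> \<Longrightarrow> \<bar>y - x0\<bar> \<le> \<delta> \<Longrightarrow> c x0 * ev (pderiv q) t y > 0"
    and gap: "\<And>x0 x1. x0 \<in> S \<Longrightarrow> x1 \<in> S \<Longrightarrow> x0 \<noteq> x1 \<Longrightarrow> 2 * \<delta> < \<bar>x0 - x1\<bar>"
    using Pd unfolding P_def by blast+
  have "\<forall>x0\<in>S. eventually (\<lambda>t. \<exists>y. \<bar>y - x0\<bar> < \<delta> \<and> ev q t y = 0) (nhds t0)"
  proof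
    fix x0 assume x0: "x0 \<in> S"
    have "ev q t0 x0 = 0" using x0 by (simp add: S_def)
    from root_nearby[OF this cnz[OF x0, unfolded c_def] dpos]
    show "eventually (\<lambda>t. \<exists>y. \<bar>y - x0\<bar> < \<delta> \<and> ev q t y = 0) (nhds t0)"
      unfolding eventually_nhds_metric dist_real_def by blast
  qed
  from eventually_ball_finite[OF fin this]
  obtain e1 where e1: "e1 > 0" "\<And>t. \<bar>t - t0\<bar> < e1 \<Longrightarrow> \<forall>x0\<in>S. \<exists>y. \<bar>y - x0\<bar> < \<delta> \<and> ev q t y = 0"
    unfolding eventually_nhds_metric dist_real_def by blast
  define e where "e = min e1 \<delta>"
  have epos: "e > 0" using e1 dpos by (simp add: e_def)
  define r where "r x0 t = (THE y. \<bar>y - x0\<bar> < \<delta> \<and> ev q t y = 0)" for x0 t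
  have uniq: "y1 = y2" if "x0 \<in> S" "\<bar>t - t0\<bar> < e" "\<bar>y1 - x0\<bar> < \<delta>" "ev q t y1 = 0"
      "\<bar>y2 - x0\<bar> < \<delta>" "ev q t y2 = 0" for x0 t y1 y2
    by (rule box_unique[of x0 \<delta> "c x0" q t]) (use that box[of x0 t] in \<open>auto simp: e_def\<close>)
  have rprop: "\<bar>r x0 t - x0\<bar> < \<delta> \<and> ev q t (r x0 t) = 0" if "x0 \<in> S" "\<bar>t - t0\<bar> < e" for x0 t
  proof -
    have "\<bar>t - t0\<bar> < e1" using that(2) by (simp add: e_def)
    from e1(2)[OF this] that(1) obtain y where y: "\<bar>y - x0\<bar> < \<delta> \<and> ev q t y = 0" by blast
    show ?thesis unfolding r_def
      by (rule theI[of _ y]) (use y uniq[OF that] in auto)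
  qed
  have runiq: "r x0 t = y" if "x0 \<in> S" "\<bar>t - t0\<bar> < e" "\<bar>y - x0\<bar> < \<delta>" "ev q t y = 0" for x0 t y
    using uniq[OF that(1,2) _ _ that(3,4)] rprop[OF that(1,2)] by blast
  have proots_eq: "proots (ev2 q t) = image_mset (\<lambda>x. r x t) (proots (ev2 q t0))" if t: "\<bar>t - t0\<bar> < e" for t
  proof -
    have inj: "inj_on (\<lambda>x. r x t) S"
    proof (rule inj_onI)
      fix x0 x1 assume "x0 \<in> S" "x1 \<in> S" "r x0 t = r x1 t"
      then show "x0 = x1" using rprop[of x0 t] rprop[of x1 t] gap[of x0 x1] t by force
    qed
    have img: "image_mset (\<lambda>x. r x t) (proots (ev2 q t0)) = mset_set ((\<lambda>x. r x t) ` S)"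
      unfolding PS by (rule image_mset_mset_set[OF inj])
    have sub: "(\<lambda>x. r x t) ` S \<subseteq> set_mset (proots (ev2 q t))"
      using rprop[OF _ t] nz by (auto simp: ev_def)
    have le: "mset_set ((\<lambda>x. r x t) ` S) \<subseteq># proots (ev2 q t)"
      using subset_mset.order_trans[OF subset_imp_msubset_mset_set[OF sub] mset_set_set_mset_msubset] by simp
    have sz: "size (mset_set ((\<lambda>x. r x t) ` S)) = degree q"
      using card_image[OF inj] cardS by simp
    have "\<not> mset_set ((\<lambda>x. r x t) ` S) \<subset># proots (ev2 q t)"
      using mset_subset_size size_proots_le[of "ev2 q t"] deg[of t] sz by fastforce
    then show ?thesis using le img by (simp add: subset_mset.le_less)
  qed
  have C2: "r x0 t0 = x0 \<and> C2at (r x0) t0 e" if x0: "x0 \<in> S" for x0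
  proof (rule conjI)
    have ev0: "ev q t0 x0 = 0" using x0 by (simp add: S_def)
    show "r x0 t0 = x0" using runiq[OF x0 _ _ ev0] dpos epos by simp
    define R where "R = r x0"
    have Rp: "\<bar>R s - x0\<bar> < \<delta> \<and> ev q s (R s) = 0" if "\<bar>s - t0\<bar> < e" for s
      using rprop[OF x0 that] by (simp add: R_def)
    have Rnz: "ev (pderiv q) s (R s) \<noteq> 0" if "\<bar>s - t0\<bar> < e" for s
      using box[OF x0, of s "R s"] Rp[OF that] that by (auto simp: e_def)
    have cont: "isCont R s" if s: "\<bar>s - t0\<bar> < e" for s
      unfolding continuous_at_eps_delta
    proof (intro allI impI)
      fix \<epsilon> :: real assume ep: "\<epsilon> > 0"
      define \<epsilon>' where "\<epsilon>' = min \<epsilon> (\<delta> - \<bar>R s - x0\<bar>)"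
      have ep': "\<epsilon>' > 0" using ep Rp[OF s] by (simp add: \<epsilon>'_def)
      obtain d1 where d1: "d1 > 0" "\<And>t. \<bar>t - s\<bar> < d1 \<Longrightarrow> \<exists>y. \<bar>y - R s\<bar> < \<epsilon>' \<and> ev q t y = 0"
        using root_nearby[OF conjunct2[OF Rp[OF s]] Rnz[OF s] ep'] by blast
      show "\<exists>d>0. \<forall>x'. dist x' s < d \<longrightarrow> dist (R x') (R s) < \<epsilon>"
      proof (rule exI[of _ "min d1 (e - \<bar>s - t0\<bar>)"], intro conjI allI impI)
        show "min d1 (e - \<bar>s - t0\<bar>) > 0" using d1 s by simp
        fix s' assume "dist s' s < min d1 (e - \<bar>s - t0\<bar>)"
        then have s1: "\<bar>s' - s\<bar> < d1" and s2: "\<bar>s' - t0\<bar> < e" by (auto simp: dist_real_def)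
        obtain y where y: "\<bar>y - R s\<bar> < \<epsilon>'" "ev q s' y = 0" using d1(2)[OF s1] by blast
        have "\<bar>y - x0\<bar> < \<delta>" using y(1) by (simp add: \<epsilon>'_def) linarith
        then have "R s' = y" using runiq[OF x0 s2 _ y(2)] by (simp add: R_def)
        then show "dist (R s') (R s) < \<epsilon>" using y(1) by (simp add: dist_real_def \<epsilon>'_def)
      qed
    qed
    define N where "N u = ev (qT q) u (R u)" for u
    define D where "D u = ev (pderiv q) u (R u)" for u
    define f1 where "f1 u = - (N u / D u)" for u
    define N' where "N' u = ev (qT (qT q)) u (R u) + ev (pderiv (qT q)) u (R u) * f1 u" for u
    define D' where "D' u = ev (qT (pderiv q)) u (R u) + ev (pderiv (pderiv q)) u (R u) * f1 u" for u
    define f2 where "f2 u = - ((N' u * D u - N u * D' u) / (D u * D u))" for u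
    have d1: "(R has_real_derivative f1 s) (at s)" if s: "\<bar>s - t0\<bar> < e" for s
    proof -
      have "(R has_real_derivative (- ev (qT q) s (R s) / ev (pderiv q) s (R s))) (at s)"
      proof (rule implicit_deriv[where F="ev q" and Ft="ev (qT q)" and Fx="ev (pderiv q)" and e="e - \<bar>s - t0\<bar>"])
        show "\<And>s y. ((\<lambda>u. ev q u y) has_real_derivative ev (qT q) s y) (at s)" by (rule ev_deriv_t)
        show "\<And>s y. (ev q s has_real_derivative ev (pderiv q) s y) (at y)" by (rule ev_deriv_x)
        show "isCont (\<lambda>z. ev (qT q) (fst z) (snd z)) (s, R s)" by (rule ev_cont2)
        show "isCont (ev (pderiv q) s) (R s)" by (rule DERIV_isCont[OF ev_deriv_x])
        show "isCont R s" by (rule cont[OF s])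
        show "ev (pderiv q) s (R s) \<noteq> 0" by (rule Rnz[OF s])
        show "0 < e - \<bar>s - t0\<bar>" using s by simp
        fix u assume "\<bar>u - s\<bar> < e - \<bar>s - t0\<bar>"
        then have "\<bar>u - t0\<bar> < e" by simp
        then show "ev q u (R u) = 0" using Rp by blast
      qed
      then show ?thesis by (simp add: f1_def N_def D_def)
    qed
    have d2: "(f1 has_real_derivative f2 s) (at s)" if s: "\<bar>s - t0\<bar> < e" for s
    proof -
      have dN: "(N has_real_derivative N' s) (at s)"
        unfolding N_def N'_def by (rule ev_deriv_chain[OF d1[OF s]])
      have dD: "(D has_real_derivative D' s) (at s)"
        unfolding D_def D'_def by (rule ev_deriv_chain[OF d1[OF s]])
      have "D s \<noteq> 0" using Rnz[OF s] by (simp add: D_def)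
      from DERIV_minus[OF DERIV_divide[OF dN dD this]]
      show ?thesis unfolding f1_def[abs_def] f2_def by simp
    qed
    have c2: "isCont f2 s" if s: "\<bar>s - t0\<bar> < e" for s
    proof -
      have cR: "\<And>p. isCont (\<lambda>u. ev p u (R u)) s" by (rule ev_cont_comp[OF cont[OF s]])
      have Dnz: "D s \<noteq> 0" using Rnz[OF s] by (simp add: D_def)
      have cN: "isCont N s" and cD: "isCont D s" unfolding N_def[abs_def] D_def[abs_def] by (rule cR)+
      have cf1: "isCont f1 s" unfolding f1_def[abs_def] using cN cD Dnz by (intro continuous_intros) auto
      have cN': "isCont N' s" unfolding N'_def[abs_def] using cR cf1 by (intro continuous_intros) auto
      have cD': "isCont D' s" unfolding D'_def[abs_def] using cR cf1 by (intro continuous_intros) auto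
      show ?thesis unfolding f2_def[abs_def] using cN cD cN' cD' Dnz by (intro continuous_intros) auto
    qed
    show "C2at (r x0) t0 e" unfolding C2at_def R_def[symmetric]
      using d1 d2 c2 by blast
  qed
  show ?thesis
    by (rule exI[of _ e], rule conjI[OF epos], rule exI[of _ r]) (use proots_eq C2 in \<open>auto simp: PS fin\<close>)
qed




lemma hA: "comm_ring_hom (map_poly (of_real::real\<Rightarrow>complex))"
proof -
  interpret map_poly_comm_ring_hom "of_real::real\<Rightarrow>complex" ..
  show ?thesis by (rule comm_ring_hom_axioms)
qed
lemma hB: "comm_ring_hom (\<lambda>p. poly (map_poly (of_real::real\<Rightarrow>complex) p) z)"
proof -
  interpret A: comm_ring_hom "map_poly (of_real::real\<Rightarrow>complex)" by (rule hA)
  interpret B: comm_ring_hom "\<lambda>p. poly p z" by (rule poly_hom.comm_ring_hom_axioms)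
  show ?thesis by unfold_locales (simp_all add: A.hom_add A.hom_mult)
qed
lemma hC: "comm_ring_hom (\<lambda>q. ev2 q t)"
proof -
  interpret map_poly_comm_ring_hom "\<lambda>p. poly p t" ..
  show ?thesis unfolding ev2_def by (rule comm_ring_hom_axioms)
qed

lemma det_hom:
  assumes "comm_ring_hom h"
  shows "h (det A) = det (\<chi> i j. h (A$i$j))"
proof -
  interpret comm_ring_hom h by fact
  show ?thesis unfolding Determinants.det_def by (simp add: hom_sum hom_mult hom_prod hom_of_int)
qed

lemma charpoly_monic:
  fixes A :: "real^'n^'n"
  shows "degree (charpoly A) = CARD('n) \<and> lead_coeff (charpoly A) = 1"
proof -
  define C where "C = (\<chi> i j. (if i = j then [:0, 1:] else 0) - [:A $ i $ j:] :: real poly^'n^'n)"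
  define P where "P = {p. p permutes (UNIV::'n set)}"
  define T where "T p = of_int (sign p) * (\<Prod>i\<in>UNIV. C $ i $ p i)" for p
  have finP: "finite P" unfolding P_def by (rule finite_permutations) simp
  have cp: "charpoly A = T id + sum T (P - {id})"
    unfolding charpoly_def Determinants.det_def C_def[symmetric] T_def[symmetric] P_def[symmetric]
    by (rule sum.remove[OF finP]) (simp add: P_def permutes_id)
  have Cii: "C $ i $ i = [:- A$i$i, 1:]" for i by (simp add: C_def)
  have Tid: "T id = (\<Prod>i\<in>UNIV. [:- A$i$i, 1:])" by (simp add: T_def sign_id Cii)
  have dTid: "degree (T id) = CARD('n)" unfolding Tid
    by (subst degree_prod_eq_sum_degree) auto
  have lTid: "lead_coeff (T id) = 1" unfolding Tid lead_coeff_prod by simp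
  have n1: "CARD('n) \<ge> 1" by (simp add: Suc_le_eq)
  have dC: "degree (C $ i $ j) \<le> (if i = j then 1 else 0)" for i j
    by (simp add: C_def)
  have dT: "degree (T p) \<le> CARD('n) - 1" if p: "p \<in> P - {id}" for p
  proof -
    have pp: "p permutes UNIV" "p \<noteq> id" using p by (auto simp: P_def)
    then obtain i0 where i0: "p i0 \<noteq> i0" by (metis eq_id_iff)
    have "degree (T p) \<le> degree (of_int (sign p) :: real poly) + degree (\<Prod>i\<in>UNIV. C $ i $ p i)"
      unfolding T_def by (rule degree_mult_le)
    also have "\<dots> = degree (\<Prod>i\<in>UNIV. C $ i $ p i)" by simp
    also have "\<dots> \<le> (\<Sum>i\<in>UNIV. degree (C $ i $ p i))"
      using degree_prod_sum_le[of "UNIV::'n set" "\<lambda>i. C $ i $ p i"] by (simp add: o_def)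
    also have "\<dots> \<le> (\<Sum>i\<in>UNIV. (if p i = i then 1 else 0))"
    proof (rule sum_mono)
      fix i show "degree (C $ i $ p i) \<le> (if p i = i then 1 else 0)" using dC[of i "p i"] by (cases "p i = i") simp_all
    qed
    also have "\<dots> = card {i. p i = i}" by (simp add: sum.If_cases)
    also have "\<dots> \<le> CARD('n) - 1"
    proof -
      have "{i. p i = i} \<subseteq> UNIV - {i0}" using i0 by auto
      then have "card {i. p i = i} \<le> card (UNIV - {i0})" by (rule card_mono[rotated]) simp
      then show ?thesis by (simp add: card_Diff_singleton)
    qed
    finally show ?thesis .
  qed
  have dS: "degree (sum T (P - {id})) \<le> CARD('n) - 1"
    by (rule degree_sum_le) (use finP dT in auto)
  have lt: "degree (sum T (P - {id})) < degree (T id)" using dS dTid n1 by linarith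
  have deg: "degree (charpoly A) = CARD('n)"
    unfolding cp using degree_add_eq_left[OF lt] dTid by simp
  have "coeff (sum T (P - {id})) (CARD('n)) = 0" using dS n1 by (intro coeff_eq_0) linarith
  then have "lead_coeff (charpoly A) = 1" using lTid dTid unfolding deg by (simp add: cp)
  with deg show ?thesis by simp
qed

lemma cmat_kernel:
  fixes B :: "complex^'n^'n"
  shows "det B = 0 \<Longrightarrow> \<exists>v. v \<noteq> 0 \<and> B *v v = 0"
    and "det B \<noteq> 0 \<Longrightarrow> B *v v = 0 \<Longrightarrow> v = 0"
proof -
  have iff: "det B \<noteq> 0 \<longleftrightarrow> inj ((*v) B)"
    using det_nz_iff_inj_gen[OF matrix_vector_mul_linear_gen[of B]]
    by (simp add: matrix_of_matrix_vector_mul)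
  show "det B = 0 \<Longrightarrow> \<exists>v. v \<noteq> 0 \<and> B *v v = 0"
  proof -
    assume "det B = 0"
    then have "\<not> inj ((*v) B)" using iff by simp
    then obtain x y where "x \<noteq> y" "B *v x = B *v y" unfolding inj_def by blast
    then show ?thesis by (intro exI[of _ "x - y"]) (simp add: matrix_vector_mult_diff_distrib)
  qed
  show "det B \<noteq> 0 \<Longrightarrow> B *v v = 0 \<Longrightarrow> v = 0"
  proof -
    assume d: "det B \<noteq> 0" and b: "B *v v = 0"
    have inj: "inj ((*v) B)" using iff d by simp
    have "B *v v = B *v 0" using b by simp
    from injD[OF inj this] show "v = 0" .
  qed
qed

lemma charpoly_eval_complex:
  fixes M :: "real^'n^'n" and z :: complex
  shows "poly (map_poly of_real (charpoly M)) z = det (\<chi> i j. (if i = j then z else 0) - of_real (M$i$j))"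
proof -
  have "(\<lambda>p. poly (map_poly (of_real::real\<Rightarrow>complex) p) z) (det (\<chi> i j. (if i = j then [:0, 1:] else 0) - [:M $ i $ j:]))
    = det (\<chi> i j. (\<lambda>p. poly (map_poly (of_real::real\<Rightarrow>complex) p) z) ((\<chi> i j. (if i = j then [:0, 1:] else 0) - [:M $ i $ j:]) $ i $ j))"
    by (rule det_hom[OF hB])
  also have "\<dots> = det (\<chi> i j. (if i = j then z else 0) - of_real (M$i$j))"
  proof -
    interpret A: comm_ring_hom "map_poly (of_real::real\<Rightarrow>complex)" by (rule hA)
    show ?thesis by (rule arg_cong[where f=det]) (simp add: Finite_Cartesian_Product.vec_eq_iff fun_eq_iff A.hom_minus Polynomial.map_poly_pCons)
  qed
  finally show ?thesis unfolding charpoly_def by simp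
qed

lemma ATA_roots:
  fixes A :: "real^'n^'n" and z :: complex
  assumes dA: "det A \<noteq> 0"
    and z: "poly (map_poly of_real (charpoly (transpose A ** A))) z = 0"
  shows "\<exists>x>0. z = of_real x"
proof -
  define M where "M = transpose A ** A"
  define B where "B = (\<chi> i j. (if i = j then z else 0) - of_real (M$i$j) :: complex^'n^'n)"
  have "det B = 0" using z by (simp add: charpoly_eval_complex B_def M_def)
  then obtain v where v: "v \<noteq> 0" "B *v v = 0" using cmat_kernel(1) by blast
  have Mij: "M$i$j = (\<Sum>k\<in>UNIV. A$k$i * A$k$j)" for i j
    by (simp add: M_def matrix_matrix_mult_def transpose_def)
  have eqi: "z * v$i = (\<Sum>j\<in>UNIV. of_real (M$i$j) * v$j)" for i
  proof -
    have "0 = (B *v v) $ i" using v by simp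
    also have "\<dots> = (\<Sum>j\<in>UNIV. ((if i = j then z else 0) - of_real (M$i$j)) * v$j)"
      by (simp add: matrix_vector_mult_def B_def)
    also have "\<dots> = (\<Sum>j\<in>UNIV. (if i = j then z * v$j else 0) - of_real (M$i$j) * v$j)"
      by (rule sum.cong) (auto simp: left_diff_distrib)
    also have "\<dots> = z * v$i - (\<Sum>j\<in>UNIV. of_real (M$i$j) * v$j)"
      by (simp add: sum_subtractf)
    finally show ?thesis by simp
  qed
  define AC where "AC = (\<chi> i j. of_real (A$i$j) :: complex^'n^'n)"
  define w where "w = AC *v v"
  have wk: "w$k = (\<Sum>j\<in>UNIV. of_real (A$k$j) * v$j)" for k
    by (simp add: w_def AC_def matrix_vector_mult_def)
  have key: "z * (\<Sum>i\<in>UNIV. cnj (v$i) * v$i) = (\<Sum>k\<in>UNIV. cnj (w$k) * w$k)"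
  proof -
    have "z * (\<Sum>i\<in>UNIV. cnj (v$i) * v$i) = (\<Sum>i\<in>UNIV. cnj (v$i) * (z * v$i))"
      by (simp add: sum_distrib_left ac_simps)
    also have "\<dots> = (\<Sum>i\<in>UNIV. cnj (v$i) * (\<Sum>j\<in>UNIV. of_real (M$i$j) * v$j))"
      by (simp add: eqi)
    also have "\<dots> = (\<Sum>i\<in>UNIV. \<Sum>j\<in>UNIV. \<Sum>k\<in>UNIV. cnj (v$i) * of_real (A$k$i) * (of_real (A$k$j) * v$j))"
      by (simp add: Mij sum_distrib_left sum_distrib_right ac_simps)
    also have "\<dots> = (\<Sum>i\<in>UNIV. \<Sum>k\<in>UNIV. \<Sum>j\<in>UNIV. cnj (v$i) * of_real (A$k$i) * (of_real (A$k$j) * v$j))"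
      by (rule sum.cong[OF refl], rule sum.swap)
    also have "\<dots> = (\<Sum>k\<in>UNIV. \<Sum>i\<in>UNIV. \<Sum>j\<in>UNIV. cnj (v$i) * of_real (A$k$i) * (of_real (A$k$j) * v$j))"
      by (rule sum.swap)
    also have "\<dots> = (\<Sum>k\<in>UNIV. (\<Sum>i\<in>UNIV. cnj (v$i) * of_real (A$k$i)) * (\<Sum>j\<in>UNIV. of_real (A$k$j) * v$j))"
      by (simp add: sum_product)
    also have "\<dots> = (\<Sum>k\<in>UNIV. cnj (w$k) * w$k)"
      by (simp add: wk ac_simps)
    finally show ?thesis .
  qed
  define Nv where "Nv = (\<Sum>i\<in>UNIV. (cmod (v$i))\<^sup>2)"
  define Nw where "Nw = (\<Sum>k\<in>UNIV. (cmod (w$k))\<^sup>2)"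
  have cs: "cnj c * c = of_real ((cmod c)\<^sup>2)" for c :: complex
    by (subst complex_norm_square) (rule mult.commute)
  have key2: "z * of_real Nv = of_real Nw"
    using key by (simp add: cs Nv_def Nw_def)
  have "\<exists>i. v$i \<noteq> 0" using v(1) by (simp add: Finite_Cartesian_Product.vec_eq_iff)
  then obtain i0 where i0: "v$i0 \<noteq> 0" by blast
  have Nvp: "Nv > 0" unfolding Nv_def
    by (rule sum_pos2[of _ i0]) (use i0 in auto)
  have "det AC = of_real (det A)" unfolding AC_def det_hom[OF of_real_hom.comm_ring_hom_axioms] ..
  then have "det AC \<noteq> 0" using dA by simp
  then have "w \<noteq> 0" using cmat_kernel(2)[of AC v] v(1) by (auto simp: w_def)
  then have "\<exists>k. w$k \<noteq> 0" by (simp add: Finite_Cartesian_Product.vec_eq_iff)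
  then obtain k0 where k0: "w$k0 \<noteq> 0" by blast
  have Nwp: "Nw > 0" unfolding Nw_def
    by (rule sum_pos2[of _ k0]) (use k0 in auto)
  have "z = of_real (Nw / Nv)" using key2 Nvp
    by (simp add: field_simps)
  then show ?thesis using Nwp Nvp by (intro exI[of _ "Nw / Nv"]) auto
qed

lemma real_split:
  fixes p :: "real poly"
  assumes "\<And>z. poly (map_poly of_real p) z = 0 \<Longrightarrow> \<exists>x. z = (of_real x :: complex)"
  shows "size (proots p) = degree p"
  using assms
proof (induction "degree p" arbitrary: p)
  case 0
  then show ?case using size_proots_le[of p] by simp
next
  case (Suc m)
  have nc: "\<not> constant (poly (map_poly (of_real :: real \<Rightarrow> complex) p))"
    using Suc(2) by (simp add: constant_degree)
  from fundamental_theorem_of_algebra[OF nc] obtain z :: complex where "poly (map_poly of_real p) z = 0" by blast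
  with Suc(3) obtain x where x: "poly (map_poly of_real p) (of_real x :: complex) = 0" by blast
  then have "poly p x = 0" by (simp add: of_real_hom.poly_map_poly)
  then obtain p1 where p1: "p = [:-x, 1:] * p1" using poly_eq_0_iff_dvd by (metis dvdE)
  have p0: "p \<noteq> 0" using Suc(2) by auto
  then have p10: "p1 \<noteq> 0" using p1 by auto
  have "degree ([:-x, 1:] * p1) = degree [:-x, 1:] + degree p1"
    by (rule degree_mult_eq) (use p10 in auto)
  then have dp1: "m = degree p1" using Suc(2) p1 by simp
  have "\<exists>x. z = of_real x" if "poly (map_poly of_real p1) z = 0" for z :: complex
  proof -
    interpret A: comm_ring_hom "map_poly (of_real::real\<Rightarrow>complex)" by (rule hA)
    have "poly (map_poly of_real p) z = poly (map_poly of_real [:-x, 1:]) z * poly (map_poly of_real p1) z"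
      by (subst p1) (simp only: A.hom_mult poly_mult)
    then have "poly (map_poly of_real p) z = 0" using that by simp
    then show ?thesis using Suc(3) by blast
  qed
  from Suc(1)[OF dp1 this] have "size (proots p1) = degree p1" .
  moreover have "proots p = proots [:-x, 1:] + proots p1" unfolding p1
    by (rule proots_mult) (use p10 in auto)
  moreover have "proots [:-x, 1:] = {#x#}" using proots_linear_factor[of "-x"] by simp
  ultimately show ?case using dp1 Suc(2) by simp
qed

lemma ATA_charpoly:
  fixes A :: "real^'n^'n"
  assumes dA: "det A \<noteq> 0"
  shows "size (proots (charpoly (transpose A ** A))) = CARD('n)"
    and "\<And>x. x \<in># proots (charpoly (transpose A ** A)) \<Longrightarrow> x > 0"
proof -
  have "size (proots (charpoly (transpose A ** A))) = degree (charpoly (transpose A ** A))"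
    by (rule real_split) (use ATA_roots[OF dA] in blast)
  then show "size (proots (charpoly (transpose A ** A))) = CARD('n)" using charpoly_monic[of "transpose A ** A"] by simp
  fix x assume x: "x \<in># proots (charpoly (transpose A ** A))"
  have nz: "charpoly (transpose A ** A) \<noteq> 0" using charpoly_monic[of "transpose A ** A"] by auto
  have "poly (charpoly (transpose A ** A)) x = 0" using x nz by simp
  then have "poly (map_poly of_real (charpoly (transpose A ** A))) (of_real x :: complex) = 0"
    by (simp add: of_real_hom.poly_map_poly)
  from ATA_roots[OF dA this] show "x > 0" by auto
qed




lemma C2at_mono: "C2at f t0 e \<Longrightarrow> e' \<le> e \<Longrightarrow> C2at f t0 e'"
  unfolding C2at_def by force

lemma C2_sqrt:
  assumes "\<And>s. \<bar>s - t0\<bar> < e \<Longrightarrow> (g has_real_derivative g1 s) (at s) \<and> (g1 has_real_derivative g2 s) (at s) \<and> isCont g2 s \<and> g s > 0"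
  shows "C2at (\<lambda>t. sqrt (g t)) t0 e"
proof -
  define h1 where "h1 s = g1 s / (2 * sqrt (g s))" for s
  define h2 where "h2 s = (g2 s * (2 * sqrt (g s)) - g1 s * (2 * (inverse (sqrt (g s)) / 2 * g1 s))) /
       (2 * sqrt (g s) * (2 * sqrt (g s)))" for s
  have "((\<lambda>t. sqrt (g t)) has_real_derivative h1 s) (at s) \<and> (h1 has_real_derivative h2 s) (at s) \<and> isCont h2 s"
    if s: "\<bar>s - t0\<bar> < e" for s
  proof -
    have dg: "(g has_real_derivative g1 s) (at s)" and dg1: "(g1 has_real_derivative g2 s) (at s)"
      and c2: "isCont g2 s" and gp: "g s > 0" using assms[OF s] by auto
    have ds: "((\<lambda>t. sqrt (g t)) has_real_derivative (inverse (sqrt (g s)) / 2 * g1 s)) (at s)"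
      by (rule DERIV_chain2[OF DERIV_real_sqrt[OF gp] dg])
    have e1: "inverse (sqrt (g s)) / 2 * g1 s = h1 s" using gp by (simp add: h1_def field_simps)
    have dden: "((\<lambda>t. 2 * sqrt (g t)) has_real_derivative 2 * (inverse (sqrt (g s)) / 2 * g1 s)) (at s)"
      by (rule DERIV_cmult[OF ds])
    have nz: "2 * sqrt (g s) \<noteq> 0" using gp by simp
    have d1: "(h1 has_real_derivative h2 s) (at s)"
      unfolding h1_def[abs_def] h2_def by (rule DERIV_divide[OF dg1 dden nz])
    have cg: "isCont g s" by (rule DERIV_isCont[OF dg])
    have cg1: "isCont g1 s" by (rule DERIV_isCont[OF dg1])
    have c: "isCont h2 s" unfolding h2_def[abs_def] using cg cg1 c2 gp
      by (intro continuous_intros) auto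
    show ?thesis using ds e1 d1 c by simp
  qed
  then show ?thesis unfolding C2at_def by blast
qed

lemma LC2_to_C2_on:
  assumes U: "open U"
    and loc: "\<And>t0. t0 \<in> U \<Longrightarrow> \<exists>e>0. \<exists>g. (\<forall>s. \<bar>s - t0\<bar> < e \<longrightarrow> f s = g s) \<and> C2at g t0 e"
  shows "C2_on U f"
proof -
  define F1 where "F1 = deriv f"
  define F2 where "F2 = deriv F1"
  have main: "(f has_real_derivative F1 s) (at s) \<and> (F1 has_real_derivative F2 s) (at s) \<and> isCont F2 s"
    if s: "s \<in> U" for s
  proof -
    obtain e g where e: "e > 0" and fg: "\<And>u. \<bar>u - s\<bar> < e \<Longrightarrow> f u = g u" and C: "C2at g s e"
      using loc[OF s] by blast
    from C obtain g1 g2 where gd: "\<And>u. \<bar>u - s\<bar> < e \<Longrightarrow> (g has_real_derivative g1 u) (at u) \<and>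
        (g1 has_real_derivative g2 u) (at u) \<and> isCont g2 u" unfolding C2at_def by blast
    define B where "B = ball s e"
    have oB: "open B" by (simp add: B_def)
    have inB: "u \<in> B \<longleftrightarrow> \<bar>u - s\<bar> < e" for u by (simp add: B_def dist_real_def abs_minus_commute)
    have fd: "(f has_real_derivative g1 u) (at u)" if "u \<in> B" for u
    proof -
      have "(g has_real_derivative g1 u) (at u)" using gd that inB by blast
      then show ?thesis
        by (rule has_field_derivative_transform_within_open[OF _ oB that]) (use fg inB in auto)
    qed
    have F1eq: "F1 u = g1 u" if "u \<in> B" for u
      unfolding F1_def using fd[OF that] by (rule DERIV_imp_deriv)
    have F1d: "(F1 has_real_derivative g2 u) (at u)" if "u \<in> B" for u
    proof -
      have "(g1 has_real_derivative g2 u) (at u)" using gd that inB by blast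
      then show ?thesis
        by (rule has_field_derivative_transform_within_open[OF _ oB that]) (use F1eq in auto)
    qed
    have F2eq: "F2 u = g2 u" if "u \<in> B" for u
      unfolding F2_def using F1d[OF that] by (rule DERIV_imp_deriv)
    have sB: "s \<in> B" using e inB by simp
    have "isCont g2 s" using gd[of s] e by simp
    then have "isCont F2 s"
      by (rule isCont_cong[THEN iffD1, rotated]) (use F2eq sB oB in \<open>auto simp: eventually_nhds intro!: exI[of _ B]\<close>)
    then show ?thesis using fd[OF sB] F1eq[OF sB] F1d[OF sB] F2eq[OF sB] by simp
  qed
  have "continuous_on U F2"
    by (rule continuous_at_imp_continuous_on) (use main in blast)
  then show ?thesis unfolding C2_on_def using main by blast
qed

lemma cont_pos_ev:
  fixes h :: "real \<Rightarrow> real"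
  assumes "isCont h a" "h a > 0"
  shows "eventually (\<lambda>t. h t > 0) (nhds a)"
  using cont_pos_nhd[OF assms] unfolding eventually_nhds_metric dist_real_def by blast

lemma sorted_local:
  fixes J :: "'a multiset" and g :: "'a \<Rightarrow> real \<Rightarrow> real"
  assumes inj: "\<And>j j'. j \<in># J \<Longrightarrow> j' \<in># J \<Longrightarrow> g j t0 = g j' t0 \<Longrightarrow> j = j'"
    and cont: "\<And>j. j \<in># J \<Longrightarrow> isCont (g j) t0"
    and k: "k < size J"
  shows "\<exists>j\<in>#J. \<exists>e>0. \<forall>t. \<bar>t - t0\<bar> < e \<longrightarrow>
           rev (sorted_list_of_multiset (image_mset (\<lambda>j. sqrt (g j t)) J)) ! k = sqrt (g j t)"
proof -
  obtain xs0 where xs0: "mset xs0 = J" using ex_mset by blast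
  define js where "js = sort_key (\<lambda>j. g j t0) xs0"
  have mjs: "mset js = J" by (simp add: js_def xs0)
  have sjs: "sorted (map (\<lambda>j. g j t0) js)" by (simp add: js_def sorted_sort_key)
  have sJ: "set js = set_mset J" using mjs by (metis set_mset_mset)
  have "\<forall>j\<in>set_mset J. \<forall>j'\<in>set_mset J. eventually (\<lambda>t. g j t0 < g j' t0 \<longrightarrow> g j t < g j' t) (nhds t0)"
  proof (intro ballI)
    fix j j' assume jj: "j \<in># J" "j' \<in># J"
    show "eventually (\<lambda>t. g j t0 < g j' t0 \<longrightarrow> g j t < g j' t) (nhds t0)"
    proof (cases "g j t0 < g j' t0")
      case True
      have "isCont (\<lambda>t. g j' t - g j t) t0" using cont jj by (intro continuous_intros) auto
      from cont_pos_ev[OF this] True show ?thesis by (auto elim: eventually_mono)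
    next
      case False then show ?thesis by simp
    qed
  qed
  then have "eventually (\<lambda>t. \<forall>j\<in>set_mset J. \<forall>j'\<in>set_mset J. g j t0 < g j' t0 \<longrightarrow> g j t < g j' t) (nhds t0)"
    by (intro eventually_ball_finite) (auto intro: eventually_ball_finite)
  then obtain e where e: "e > 0" and ord: "\<And>t j j'. \<bar>t - t0\<bar> < e \<Longrightarrow> j \<in># J \<Longrightarrow> j' \<in># J \<Longrightarrow>
       g j t0 < g j' t0 \<Longrightarrow> g j t < g j' t"
    unfolding eventually_nhds_metric dist_real_def by blast
  define j where "j = js ! (length js - Suc k)"
  have ljs: "length js = size J" using mjs by (metis size_mset)
  have jJ: "j \<in># J" unfolding j_def using k ljs sJ by (metis diff_Suc_less gr_implies_not0 nth_mem zero_less_iff_neq_zero)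
  show ?thesis
  proof (rule bexI[OF _ jJ], rule exI[of _ e], intro conjI allI impI)
    show "e > 0" by (rule e)
    fix t assume t: "\<bar>t - t0\<bar> < e"
    have srt: "sorted (map (\<lambda>j. sqrt (g j t)) js)"
      unfolding sorted_iff_nth_mono
    proof (intro allI impI)
      fix a b assume ab: "a \<le> b" "b < length (map (\<lambda>j. sqrt (g j t)) js)"
      have inJ: "js ! a \<in># J" "js ! b \<in># J" using ab sJ by auto
      have "g (js ! a) t0 \<le> g (js ! b) t0"
        using sorted_nth_mono[OF sjs ab(1)] ab by simp
      then have "g (js ! a) t \<le> g (js ! b) t"
        using ord[OF t inJ] inj[OF inJ] by (cases "g (js ! a) t0 = g (js ! b) t0") auto
      then show "map (\<lambda>j. sqrt (g j t)) js ! a \<le> map (\<lambda>j. sqrt (g j t)) js ! b"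
        using ab by simp
    qed
    have eqm: "image_mset (\<lambda>j. sqrt (g j t)) J = mset (map (\<lambda>j. sqrt (g j t)) js)" using mjs by simp
    have "sorted_list_of_multiset (image_mset (\<lambda>j. sqrt (g j t)) J) = map (\<lambda>j. sqrt (g j t)) js"
      unfolding eqm sorted_list_of_multiset_mset by (rule sorted_sort_id[OF srt])
    then show "rev (sorted_list_of_multiset (image_mset (\<lambda>j. sqrt (g j t)) J)) ! k = sqrt (g j t)"
      using k ljs by (simp add: rev_nth j_def)
  qed
qed




instance poly :: ("{factorial_ring_gcd,semiring_gcd_mult_normalize,normalization_semidom_multiplicative}") factorial_semiring_multiplicative ..

definition Ap :: "real^'n^'n \<Rightarrow> real^'n^'n \<Rightarrow> real poly^'n^'n" where
  "Ap F H = (\<chi> i j. [:F$i$j, H$i$j:])"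
definition Pbig :: "real^'n^'n \<Rightarrow> real^'n^'n \<Rightarrow> real poly poly" where
  "Pbig F H = det (\<chi> i j. (if i = j then [:0, 1:] else 0) - [:(transpose (Ap F H) ** Ap F H)$i$j:])"

lemma Ap_eval: "poly ((Ap F H)$i$j) t = (F + t *\<^sub>R H)$i$j"
  by (simp add: Ap_def)

lemma Mp_eval: "poly ((transpose (Ap F H) ** Ap F H)$i$j) t = (transpose (F + t *\<^sub>R H) ** (F + t *\<^sub>R H))$i$j"
  unfolding matrix_matrix_mult_def transpose_def
  by (simp add: poly_hom.hom_sum Ap_eval del: vector_add_component vector_scaleR_component)

lemma Pbig_eval: "ev2 (Pbig F H) t = charpoly (transpose (F + t *\<^sub>R H) ** (F + t *\<^sub>R H))"
proof -
  interpret C: comm_ring_hom "\<lambda>q. ev2 q t" by (rule hC)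
  have "ev2 (Pbig F H) t = det (\<chi> i j. ev2 ((\<chi> i j. (if i = j then [:0, 1:] else 0) - [:(transpose (Ap F H) ** Ap F H)$i$j:]) $ i $ j) t)"
    unfolding Pbig_def by (rule det_hom[OF hC])
  also have "\<dots> = charpoly (transpose (F + t *\<^sub>R H) ** (F + t *\<^sub>R H))"
    unfolding charpoly_def
    by (rule arg_cong[where f=det]) (simp add: Finite_Cartesian_Product.vec_eq_iff C.hom_minus ev2_def Mp_eval[symmetric] Polynomial.map_poly_pCons)
  finally show ?thesis .
qed

lemma det_eval: "poly (det (Ap F H)) t = det (F + t *\<^sub>R H)"
proof -
  have "poly (det (Ap F H)) t = det (\<chi> i j. poly ((Ap F H) $ i $ j) t)"
    by (rule det_hom[OF poly_hom.comm_ring_hom_axioms])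
  also have "\<dots> = det (F + t *\<^sub>R H)" by (rule arg_cong[where f=det]) (simp add: Finite_Cartesian_Product.vec_eq_iff Ap_eval)
  finally show ?thesis .
qed

lemma coeff_ev2: "coeff (ev2 q t) k = poly (coeff q k) t"
  by (simp add: ev2_def coeff_map_poly)

lemma Pbig_monic:
  fixes F H :: "real^'n^'n"
  shows "lead_coeff (Pbig F H) = 1 \<and> degree (Pbig F H) = CARD('n)"
proof -
  define P where "P = Pbig F H"
  have cm: "degree (ev2 P t) = CARD('n) \<and> lead_coeff (ev2 P t) = 1" for t
    unfolding P_def Pbig_eval by (rule charpoly_monic)
  have cn: "coeff P (CARD('n)) = 1"
  proof -
    have "poly (coeff P (CARD('n))) = poly 1"
    proof
      fix x
      have "coeff (ev2 P x) (CARD('n)) = 1" using cm[of x] by metis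
      then show "poly (coeff P (CARD('n))) x = poly 1 x" by (simp add: coeff_ev2)
    qed
    then show ?thesis by (simp add: poly_eq_poly_eq_iff)
  qed
  have ck: "coeff P k = 0" if "k > CARD('n)" for k
  proof -
    have "poly (coeff P k) = poly 0"
    proof
      fix x
      have "coeff (ev2 P x) k = 0" using cm[of x] that by (intro coeff_eq_0) simp
      then show "poly (coeff P k) x = poly 0 x" by (simp add: coeff_ev2)
    qed
    then show ?thesis by (simp add: poly_eq_poly_eq_iff)
  qed
  have "degree P \<le> CARD('n)" by (rule degree_le) (use ck in auto)
  moreover have "CARD('n) \<le> degree P" by (rule le_degree) (simp add: cn)
  ultimately have "degree P = CARD('n)" by simp
  then show ?thesis using cn by (simp add: P_def)
qed

lemma unit_poly_nz:
  assumes "is_unit (c :: real poly)"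
  shows "poly c t \<noteq> 0"
proof -
  have c0: "c \<noteq> 0" using assms by auto
  then have "degree c = 0" using assms is_unit_iff_degree by blast
  then obtain a where a: "c = [:a:]" by (elim degree_eq_zeroE)
  then show ?thesis using c0 by simp
qed

lemma res_eval:
  assumes "degree (ev2 f t) = degree f" "degree (ev2 g t) = degree g"
  shows "resultant (ev2 f t) (ev2 g t) = poly (resultant f g) t"
  unfolding ev2_def using assms unfolding ev2_def
  by (rule comm_ring_hom.resultant_map_poly[OF poly_hom.comm_ring_hom_axioms])

lemma no_common_root:
  fixes f g :: "real poly"
  assumes "f \<noteq> 0" "resultant f g \<noteq> 0" "poly f x = 0" "poly g x = 0"
  shows False
proof -
  have d0: "degree (gcd f g) = 0" using assms(2) resultant_0_gcd by blast
  have "[:-x, 1:] dvd f" "[:-x, 1:] dvd g" using assms(3,4) by (simp_all add: poly_eq_0_iff_dvd)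
  then have "[:-x, 1:] dvd gcd f g" by simp
  moreover have "gcd f g \<noteq> 0" using assms(1) by simp
  ultimately have "degree [:-x, 1:] \<le> degree (gcd f g)" by (rule dvd_imp_degree_le)
  then show False using d0 by simp
qed

lemma degree_ev2_pderiv:
  assumes "\<And>t. poly (lead_coeff q) t \<noteq> 0"
  shows "degree (ev2 (pderiv q) t) = degree (pderiv q)"
proof -
  have "ev2 (pderiv q) t = pderiv (ev2 q t)" by (simp add: ev2_def poly_hom.map_poly_pderiv)
  then show ?thesis using ev2_lc(1)[OF assms] by (simp add: degree_pderiv)
qed

lemma prime_factor_props:
  fixes P p :: "real poly poly"
  assumes lc: "lead_coeff P = 1" and p: "p \<in># prime_factorization P"
  shows "\<And>t. poly (lead_coeff p) t \<noteq> 0" "degree p \<ge> 1" "resultant p (pderiv p) \<noteq> 0" "p dvd P" "prime p"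
proof -
  have P0: "P \<noteq> 0" using lc by auto
  show pr: "prime p" using p by (rule in_prime_factors_imp_prime)
  show dv: "p dvd P" using p by (rule in_prime_factors_imp_dvd)
  then obtain w where w: "P = p * w" by (elim dvdE)
  have "lead_coeff p * lead_coeff w = 1" using lc unfolding w lead_coeff_mult by simp
  then have u: "is_unit (lead_coeff p)" by (metis dvdI)
  show lcp: "\<And>t. poly (lead_coeff p) t \<noteq> 0" by (rule unit_poly_nz[OF u])
  show dg: "degree p \<ge> 1"
  proof (rule ccontr)
    assume "\<not> degree p \<ge> 1"
    then have "degree p = 0" by simp
    then obtain a where a: "p = [:a:]" by (elim degree_eq_zeroE)
    then have "lead_coeff p = a" by simp
    then have "is_unit p" using u a by (simp add: is_unit_const_poly_iff)
    then show False using pr by (simp add: prime_def)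
  qed
  have pd0: "pderiv p \<noteq> 0" using dg by (simp add: pderiv_eq_0_iff)
  have "\<not> p dvd pderiv p"
  proof
    assume "p dvd pderiv p"
    from dvd_imp_degree_le[OF this pd0] have "degree p \<le> degree (pderiv p)" .
    then show False using dg by (simp add: degree_pderiv)
  qed
  then have "coprime p (pderiv p)" by (rule prime_imp_coprime[OF pr])
  then have "gcd p (pderiv p) = 1" by (simp add: coprime_iff_gcd_eq_1)
  then show "resultant p (pderiv p) \<noteq> 0" using resultant_0_gcd[of p "pderiv p"] by simp
qed

lemma prime_pair_res:
  fixes p p' :: "real poly poly"
  assumes "prime p" "prime p'" "p \<noteq> p'"
  shows "resultant p p' \<noteq> 0"
proof -
  have "coprime p p'" by (rule primes_coprime[OF assms])
  then have "gcd p p' = 1" by (simp add: coprime_iff_gcd_eq_1)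
  then show ?thesis using resultant_0_gcd[of p p'] by simp
qed

lemma Pbig_prod: "prod_mset (prime_factorization (Pbig F H)) = Pbig F H"
proof -
  have lc: "lead_coeff (Pbig F H) = 1" using Pbig_monic by blast
  then have nz: "Pbig F H \<noteq> 0" by auto
  have "unit_factor (Pbig F H) = 1" using lc by (simp add: unit_factor_poly_def)
  then have "normalize (Pbig F H) = Pbig F H" using normalize_mult_unit_factor[of "Pbig F H"] by simp
  then show ?thesis using prod_mset_prime_factorization[OF nz] by simp
qed




lemma proots_prod_mset:
  fixes M :: "real poly multiset"
  assumes "0 \<notin># M"
  shows "proots (prod_mset M) = sum_mset (image_mset proots M)"
  using assms
proof (induction M)
  case empty then show ?case by simp
next
  case (add x M)
  have "prod_mset M \<noteq> 0" using add(2) by (simp add: prod_mset_zero_iff)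
  moreover have "x \<noteq> 0" using add(2) by auto
  ultimately show ?case using add by (simp add: proots_mult)
qed

lemma divisor_split:
  fixes f g :: "real poly"
  assumes f0: "f \<noteq> 0" and sp: "size (proots f) = degree f" and dv: "g dvd f"
  shows "size (proots g) = degree g"
proof -
  obtain h where h: "f = g * h" using dv by (elim dvdE)
  have g0: "g \<noteq> 0" and h0: "h \<noteq> 0" using f0 h by auto
  have "proots f = proots g + proots h" unfolding h by (rule proots_mult[OF g0 h0])
  moreover have "degree f = degree g + degree h" unfolding h by (rule degree_mult_eq[OF g0 h0])
  ultimately show ?thesis using sp size_proots_le[of g] size_proots_le[of h] by simp
qed

lemma image_mset_sum_mset_image:
  "image_mset f (sum_mset (image_mset G M)) = sum_mset (image_mset (\<lambda>x. image_mset f (G x)) M)"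
  by (induction M) auto

lemma in_sum_pair:
  assumes "j \<in># sum_mset (image_mset (\<lambda>p. image_mset (Pair p) (X p)) M)"
  shows "fst j \<in># M \<and> snd j \<in># X (fst j)"
  using assms by (induction M) auto

lemma local_rep:
  fixes PF :: "real poly poly multiset" and t0 :: real
  assumes lcs: "\<And>p t. p \<in># PF \<Longrightarrow> poly (lead_coeff p) t \<noteq> 0"
    and sf: "\<And>p x. p \<in># PF \<Longrightarrow> \<not> (ev p t0 x = 0 \<and> ev (pderiv p) t0 x = 0)"
    and disj: "\<And>p p' x. p \<in># PF \<Longrightarrow> p' \<in># PF \<Longrightarrow> p \<noteq> p' \<Longrightarrow> \<not> (ev p t0 x = 0 \<and> ev p' t0 x = 0)"
    and split: "size (proots (ev2 (prod_mset PF) t0)) = degree (ev2 (prod_mset PF) t0)"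
  shows "\<exists>e>0. \<exists>(J :: (real poly poly \<times> real) multiset) g.
     (\<forall>t. \<bar>t - t0\<bar> < e \<longrightarrow> proots (ev2 (prod_mset PF) t) = image_mset (\<lambda>j. g j t) J)
     \<and> (\<forall>j\<in>#J. C2at (g j) t0 e) \<and> (\<forall>j\<in>#J. \<forall>j'\<in>#J. g j t0 = g j' t0 \<longrightarrow> j = j')"
proof -
  have evprod: "ev2 (prod_mset PF) t = prod_mset (image_mset (\<lambda>p. ev2 p t) PF)" for t
  proof -
    interpret comm_ring_hom "\<lambda>q. ev2 q t" by (rule hC)
    show ?thesis by (rule hom_prod_mset)
  qed
  have nz: "ev2 p t \<noteq> 0" if "p \<in># PF" for p t using ev2_lc(2)[OF lcs[OF that]] .
  have prt: "proots (ev2 (prod_mset PF) t) = sum_mset (image_mset (\<lambda>p. proots (ev2 p t)) PF)" for t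
  proof -
    have "0 \<notin># image_mset (\<lambda>p. ev2 p t) PF" using nz by auto
    from proots_prod_mset[OF this] show ?thesis unfolding evprod by (simp add: image_mset.compositionality o_def)
  qed
  have nzP: "ev2 (prod_mset PF) t0 \<noteq> 0" unfolding evprod using nz by (auto simp: prod_mset_zero_iff)
  have splitp: "size (proots (ev2 p t0)) = degree p" if p: "p \<in># PF" for p
  proof -
    have "p dvd prod_mset PF" using p by (rule dvd_prod_mset)
    then have "ev2 p t0 dvd ev2 (prod_mset PF) t0"
    proof -
      interpret comm_ring_hom "\<lambda>q. ev2 q t0" by (rule hC)
      show "p dvd prod_mset PF \<Longrightarrow> ev2 p t0 dvd ev2 (prod_mset PF) t0" by (rule hom_dvd)
    qed
    from divisor_split[OF nzP split this] show ?thesis using ev2_lc(1)[OF lcs[OF p]] by simp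
  qed
  have "\<forall>p\<in>set_mset PF. \<exists>er. fst er > 0 \<and>
     (\<forall>t. \<bar>t - t0\<bar> < fst er \<longrightarrow> proots (ev2 p t) = image_mset (\<lambda>x. snd er x t) (proots (ev2 p t0)))
     \<and> (\<forall>x\<in>#proots (ev2 p t0). snd er x t0 = x \<and> C2at (snd er x) t0 (fst er))"
  proof
    fix p assume p: "p \<in># PF"
    have lcp: "\<And>t. poly (lead_coeff p) t \<noteq> 0" using lcs[OF p] .
    from branch_lemma[OF lcp sf[OF p] splitp[OF p]] show "\<exists>er. fst er > 0 \<and>
     (\<forall>t. \<bar>t - t0\<bar> < fst er \<longrightarrow> proots (ev2 p t) = image_mset (\<lambda>x. snd er x t) (proots (ev2 p t0)))
     \<and> (\<forall>x\<in>#proots (ev2 p t0). snd er x t0 = x \<and> C2at (snd er x) t0 (fst er))"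
    proof (elim exE conjE)
      fix e r assume h: "e > 0" "\<forall>t. \<bar>t - t0\<bar> < e \<longrightarrow> proots (ev2 p t) = image_mset (\<lambda>x. r x t) (proots (ev2 p t0))"
        "\<forall>x\<in>#proots (ev2 p t0). r x t0 = x \<and> C2at (r x) t0 e"
      show ?thesis by (rule exI[of _ "(e, r)"]) (simp only: fst_conv snd_conv, intro conjI h)
    qed
  qed
  from bchoice[OF this] obtain f where f: "\<forall>p\<in>set_mset PF. fst (f p) > 0 \<and>
     (\<forall>t. \<bar>t - t0\<bar> < fst (f p) \<longrightarrow> proots (ev2 p t) = image_mset (\<lambda>x. snd (f p) x t) (proots (ev2 p t0)))
     \<and> (\<forall>x\<in>#proots (ev2 p t0). snd (f p) x t0 = x \<and> C2at (snd (f p) x) t0 (fst (f p)))" by (rule exE)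
  define E where "E p = fst (f p)" for p
  define R where "R p = snd (f p)" for p
  have Epos: "E p > 0" and Erep: "\<And>t. \<bar>t - t0\<bar> < E p \<Longrightarrow> proots (ev2 p t) = image_mset (\<lambda>x. R p x t) (proots (ev2 p t0))"
    and R0: "\<And>x. x \<in># proots (ev2 p t0) \<Longrightarrow> R p x t0 = x" and RC: "\<And>x. x \<in># proots (ev2 p t0) \<Longrightarrow> C2at (R p x) t0 (E p)"
    if "p \<in># PF" for p using bspec[OF f that] unfolding E_def R_def by blast+
  define e0 where "e0 = Min (insert 1 (E ` set_mset PF))"
  have fin: "finite (insert 1 (E ` set_mset PF))" by simp
  have e0pos: "e0 > 0" unfolding e0_def using Epos by (subst Min_gr_iff[OF fin]) auto
  have e0le: "e0 \<le> E p" if "p \<in># PF" for p unfolding e0_def using that by (intro Min_le fin) auto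
  define J where "J = sum_mset (image_mset (\<lambda>p. image_mset (Pair p) (proots (ev2 p t0))) PF)"
  define g where "g j t = R (fst j) (snd j) t" for j t
  have inJ: "fst j \<in># PF \<and> snd j \<in># proots (ev2 (fst j) t0)" if "j \<in># J" for j
    using that unfolding J_def by (rule in_sum_pair)
  show ?thesis
  proof (intro exI[of _ e0] conjI e0pos exI[of _ J] exI[of _ g] allI impI ballI)
    fix t assume t: "\<bar>t - t0\<bar> < e0"
    have "proots (ev2 (prod_mset PF) t) = sum_mset (image_mset (\<lambda>p. image_mset (\<lambda>x. R p x t) (proots (ev2 p t0))) PF)"
      unfolding prt
    proof (rule arg_cong[where f=sum_mset], rule image_mset_cong)
      fix p assume p: "p \<in># PF"
      have "\<bar>t - t0\<bar> < E p" using t e0le[OF p] by simp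
      then show "proots (ev2 p t) = image_mset (\<lambda>x. R p x t) (proots (ev2 p t0))" by (rule Erep[OF p])
    qed
    also have "\<dots> = image_mset (\<lambda>j. g j t) J"
      unfolding J_def image_mset_sum_mset_image by (simp add: g_def image_mset.compositionality o_def)
    finally show "proots (ev2 (prod_mset PF) t) = image_mset (\<lambda>j. g j t) J" .
  next
    fix j assume j: "j \<in># J"
    have "C2at (R (fst j) (snd j)) t0 (E (fst j))" using RC inJ[OF j] by blast
    then have "C2at (R (fst j) (snd j)) t0 e0" by (rule C2at_mono) (use e0le inJ[OF j] in blast)
    moreover have "g j = R (fst j) (snd j)" by (simp add: g_def[abs_def])
    ultimately show "C2at (g j) t0 e0" by simp
  next
    fix j j' assume j: "j \<in># J" and j': "j' \<in># J" and eq: "g j t0 = g j' t0"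
    have v: "g j t0 = snd j" "g j' t0 = snd j'" using R0 inJ[OF j] inJ[OF j'] by (auto simp: g_def)
    have sn: "snd j = snd j'" using eq v by simp
    have "fst j = fst j'"
    proof (rule ccontr)
      assume ne: "fst j \<noteq> fst j'"
      have "poly (ev2 (fst j) t0) (snd j) = 0" "poly (ev2 (fst j') t0) (snd j') = 0"
        using inJ[OF j] inJ[OF j'] nz by auto
      then show False using disj[OF conjunct1[OF inJ[OF j]] conjunct1[OF inJ[OF j']] ne, of "snd j"] sn
        by (simp add: ev_def)
    qed
    then show "j = j'" using sn by (simp add: prod_eq_iff)
  qed
qed




theorem lemma4p1:
  fixes F H :: "real^'n^'n"
  assumes "det F > 0"
    and "rank H = 1"
    and "det (F + H) > 0"
  shows "\<exists>T. finite T \<and> T \<subseteq> {0<..<1} \<and>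
           (\<forall>k < CARD('n). C2_on ({0<..<1} - T) (\<lambda>t. sing_vals (F + t *\<^sub>R H) ! k))"
proof -
  define P where "P = Pbig F H"
  define PF where "PF = prime_factorization P"
  have lcP: "lead_coeff P = 1" using Pbig_monic unfolding P_def by blast
  have Pprod: "prod_mset PF = P" unfolding PF_def P_def by (rule Pbig_prod)
  note props = prime_factor_props[OF lcP, folded PF_def]
  define dp where "dp = det (Ap F H)"
  have dp0: "dp \<noteq> 0"
  proof
    assume "dp = 0"
    then have "poly dp 0 = 0" by simp
    then show False using assms(1) unfolding dp_def det_eval by simp
  qed
  define Q where "Q = {pq. fst pq \<in># PF \<and> snd pq \<in># PF \<and> fst pq \<noteq> snd pq}"
  have finQ: "finite Q" by (rule finite_subset[of _ "set_mset PF \<times> set_mset PF"]) (auto simp: Q_def)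
  define BP where "BP = insert dp ((\<lambda>p. resultant p (pderiv p)) ` set_mset PF \<union> (\<lambda>pq. resultant (fst pq) (snd pq)) ` Q)"
  have finBP: "finite BP" using finQ by (simp add: BP_def)
  have nzBP: "b \<noteq> 0" if b: "b \<in> BP" for b
  proof -
    consider "b = dp" | p where "p \<in># PF" "b = resultant p (pderiv p)"
      | pq where "pq \<in> Q" "b = resultant (fst pq) (snd pq)" using b unfolding BP_def by blast
    then show ?thesis
    proof cases
      case 1 then show ?thesis using dp0 by simp
    next
      case (2 p) then show ?thesis using props(3)[of p] by simp
    next
      case (3 pq)
      then have q: "fst pq \<in># PF" "snd pq \<in># PF" "fst pq \<noteq> snd pq" by (auto simp: Q_def)
      have "prime (fst pq)" "prime (snd pq)" using props(5) q(1,2) by auto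
      from prime_pair_res[OF this q(3)] show ?thesis using 3(2) by simp
    qed
  qed
  define T where "T = {0<..<1} \<inter> (\<Union>b\<in>BP. {t. poly b t = 0})"
  have finT: "finite T" unfolding T_def
    by (rule finite_Int, rule disjI2, rule finite_UN_I[OF finBP]) (use nzBP poly_roots_finite in auto)
  have TU: "T \<subseteq> {0<..<1}" by (auto simp: T_def)
  define U where "U = {0<..<(1::real)} - T"
  have oU: "open U" unfolding U_def by (intro open_Diff open_greaterThanLessThan finite_imp_closed finT)
  have good: "poly b t \<noteq> 0" if "t \<in> U" "b \<in> BP" for t b using that by (auto simp: U_def T_def)
  have detne: "det (F + t *\<^sub>R H) \<noteq> 0" if "t \<in> U" for t
    using good[OF that, of dp] by (simp add: BP_def dp_def det_eval)
  have rootsP: "proots (charpoly (transpose (F + t *\<^sub>R H) ** (F + t *\<^sub>R H))) = proots (ev2 (prod_mset PF) t)" for t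
    by (simp add: Pprod P_def Pbig_eval)
  have C2k: "C2_on U (\<lambda>t. sing_vals (F + t *\<^sub>R H) ! k)" if k: "k < CARD('n)" for k
  proof (rule LC2_to_C2_on[OF oU])
    fix t0 assume t0: "t0 \<in> U"
    have lcs: "\<And>p t. p \<in># PF \<Longrightarrow> poly (lead_coeff p) t \<noteq> 0" using props(1) by blast
    have sf: "\<not> (ev p t0 x = 0 \<and> ev (pderiv p) t0 x = 0)" if p: "p \<in># PF" for p x
    proof
      assume h: "ev p t0 x = 0 \<and> ev (pderiv p) t0 x = 0"
      have d1: "degree (ev2 p t0) = degree p" by (rule ev2_lc(1)[OF props(1)[OF p]])
      have d2: "degree (ev2 (pderiv p) t0) = degree (pderiv p)" by (rule degree_ev2_pderiv[OF props(1)[OF p]])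
      have "resultant (ev2 p t0) (ev2 (pderiv p) t0) = poly (resultant p (pderiv p)) t0" by (rule res_eval[OF d1 d2])
      also have "\<dots> \<noteq> 0"
      proof -
        have "resultant p (pderiv p) \<in> BP" unfolding BP_def using p by blast
        then show ?thesis by (rule good[OF t0])
      qed
      finally have r: "resultant (ev2 p t0) (ev2 (pderiv p) t0) \<noteq> 0" .
      show False
        by (rule no_common_root[OF ev2_lc(2)[OF props(1)[OF p]] r, where x=x]) (use h in \<open>simp_all add: ev_def\<close>)
    qed
    have disj: "\<not> (ev p t0 x = 0 \<and> ev p' t0 x = 0)" if p: "p \<in># PF" and p': "p' \<in># PF" and ne: "p \<noteq> p'" for p p' x
    proof
      assume h: "ev p t0 x = 0 \<and> ev p' t0 x = 0"
      have d1: "degree (ev2 p t0) = degree p" by (rule ev2_lc(1)[OF props(1)[OF p]])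
      have d2: "degree (ev2 p' t0) = degree p'" by (rule ev2_lc(1)[OF props(1)[OF p']])
      have "resultant (ev2 p t0) (ev2 p' t0) = poly (resultant p p') t0" by (rule res_eval[OF d1 d2])
      also have "\<dots> \<noteq> 0"
      proof -
        have "(p, p') \<in> Q" using p p' ne by (simp add: Q_def)
        then have "resultant (fst (p, p')) (snd (p, p')) \<in> BP" unfolding BP_def by blast
        then show ?thesis using good[OF t0] by simp
      qed
      finally have r: "resultant (ev2 p t0) (ev2 p' t0) \<noteq> 0" .
      show False
        by (rule no_common_root[OF ev2_lc(2)[OF props(1)[OF p]] r, where x=x]) (use h in \<open>simp_all add: ev_def\<close>)
    qed
    have spl: "size (proots (ev2 (prod_mset PF) t0)) = degree (ev2 (prod_mset PF) t0)"
      using ATA_charpoly(1)[OF detne[OF t0]] charpoly_monic[of "transpose (F + t0 *\<^sub>R H) ** (F + t0 *\<^sub>R H)"]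
      by (simp add: Pprod P_def Pbig_eval)
    have LR: "\<exists>e>0. \<exists>(J :: (real poly poly \<times> real) multiset) g.
     (\<forall>t. \<bar>t - t0\<bar> < e \<longrightarrow> proots (ev2 (prod_mset PF) t) = image_mset (\<lambda>j. g j t) J)
     \<and> (\<forall>j\<in>#J. C2at (g j) t0 e) \<and> (\<forall>j\<in>#J. \<forall>j'\<in>#J. g j t0 = g j' t0 \<longrightarrow> j = j')"
      apply (rule local_rep)
         apply (rule lcs, assumption)
        apply (rule sf, assumption)
       apply (rule disj; assumption)
      apply (rule spl)
      done
    from LR obtain e1 and J :: "(real poly poly \<times> real) multiset" and g where e1: "e1 > 0"
      and rep: "\<And>t. \<bar>t - t0\<bar> < e1 \<Longrightarrow> proots (ev2 (prod_mset PF) t) = image_mset (\<lambda>j. g j t) J"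
      and gC: "\<And>j. j \<in># J \<Longrightarrow> C2at (g j) t0 e1"
      and ginj: "\<And>j j'. j \<in># J \<Longrightarrow> j' \<in># J \<Longrightarrow> g j t0 = g j' t0 \<Longrightarrow> j = j'" by blast
    obtain e2 where e2: "e2 > 0" "ball t0 e2 \<subseteq> U" using oU t0 by (meson openE)
    have inU: "t \<in> U" if "\<bar>t - t0\<bar> < e2" for t using e2 that by (auto simp: dist_real_def)
    have sJ: "size J = CARD('n)"
    proof -
      have "size (proots (ev2 (prod_mset PF) t0)) = CARD('n)"
        using ATA_charpoly(1)[OF detne[OF t0]] rootsP by simp
      then show ?thesis using rep[of t0] e1 by simp
    qed
    have gcont: "isCont (g j) t0" if "j \<in># J" for j
    proof -
      from gC[OF that] obtain f1 f2 where "\<forall>s. \<bar>s - t0\<bar> < e1 \<longrightarrow> (g j has_real_derivative f1 s) (at s) \<and>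
          (f1 has_real_derivative f2 s) (at s) \<and> isCont f2 s" unfolding C2at_def by blast
      then have "(g j has_real_derivative f1 t0) (at t0)" using e1 by simp
      then show ?thesis by (rule DERIV_isCont)
    qed
    have SL: "\<exists>j\<in>#J. \<exists>e>0. \<forall>t. \<bar>t - t0\<bar> < e \<longrightarrow>
           rev (sorted_list_of_multiset (image_mset (\<lambda>j. sqrt (g j t)) J)) ! k = sqrt (g j t)"
      apply (rule sorted_local)
        apply (rule ginj; assumption)
       apply (rule gcont; assumption)
      using k sJ apply simp
      done
    from SL obtain j e3 where
      j: "j \<in># J" and e3: "e3 > 0"
      and srt: "\<And>t. \<bar>t - t0\<bar> < e3 \<Longrightarrow> rev (sorted_list_of_multiset (image_mset (\<lambda>j. sqrt (g j t)) J)) ! k = sqrt (g j t)"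
      by blast
    define e where "e = min e1 (min e2 e3)"
    have epos: "e > 0" using e1 e2 e3 by (simp add: e_def)
    have feq: "sing_vals (F + s *\<^sub>R H) ! k = sqrt (g j s)" if s: "\<bar>s - t0\<bar> < e" for s
    proof -
      have rs: "proots (ev2 (prod_mset PF) s) = image_mset (\<lambda>j. g j s) J" using rep s by (simp add: e_def)
      have "sing_vals (F + s *\<^sub>R H) = rev (sorted_list_of_multiset (image_mset sqrt (image_mset (\<lambda>j. g j s) J)))"
        unfolding sing_vals_def rootsP rs ..
      also have "\<dots> = rev (sorted_list_of_multiset (image_mset (\<lambda>j. sqrt (g j s)) J))"
        by (simp add: image_mset.compositionality o_def)
      finally show ?thesis using srt[of s] s by (simp add: e_def)
    qed
    obtain g1 g2 where gd: "\<And>s. \<bar>s - t0\<bar> < e1 \<Longrightarrow> (g j has_real_derivative g1 s) (at s) \<and>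
        (g1 has_real_derivative g2 s) (at s) \<and> isCont g2 s"
      using gC[OF j] unfolding C2at_def by blast
    have "C2at (\<lambda>t. sqrt (g j t)) t0 e"
    proof (rule C2_sqrt)
      fix s assume s: "\<bar>s - t0\<bar> < e"
      have sU: "s \<in> U" using inU s by (simp add: e_def)
      have rs: "proots (ev2 (prod_mset PF) s) = image_mset (\<lambda>j. g j s) J" using rep s by (simp add: e_def)
      have "g j s \<in># proots (charpoly (transpose (F + s *\<^sub>R H) ** (F + s *\<^sub>R H)))"
        unfolding rootsP rs using j by simp
      then have "g j s > 0" by (rule ATA_charpoly(2)[OF detne[OF sU]])
      then show "(g j has_real_derivative g1 s) (at s) \<and> (g1 has_real_derivative g2 s) (at s) \<and> isCont g2 s \<and> g j s > 0"
        using gd[of s] s by (simp add: e_def)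
    qed
    then show "\<exists>e>0. \<exists>g'. (\<forall>s. \<bar>s - t0\<bar> < e \<longrightarrow> sing_vals (F + s *\<^sub>R H) ! k = g' s) \<and> C2at g' t0 e"
    proof (intro exI[of _ e] conjI[OF epos] exI[of _ "\<lambda>t. sqrt (g j t)"] conjI)
      show "\<forall>s. \<bar>s - t0\<bar> < e \<longrightarrow> sing_vals (F + s *\<^sub>R H) ! k = sqrt (g j s)" using feq by blast
    qed
  qed
  show ?thesis
  proof (rule exI[of _ T], intro conjI allI impI)
    show "finite T" by (rule finT)
    show "T \<subseteq> {0<..<1}" by (rule TU)
    fix k assume "k < CARD('n)"
    from C2k[OF this] show "C2_on ({0<..<1} - T) (\<lambda>t. sing_vals (F + t *\<^sub>R H) ! k)" by (simp add: U_def)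
  qed
qed


end
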